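(* Let $n\ge 2$ and $0\le r\le n$, and work in the polynomial ring $R=k[\alpha_{i,0},\alpha_{i,1},\beta_{m,0},\beta_{m,1}: 1\le i\le n,\ 1\le m\le n-2]$, with $f_n(x,y)=\prod_{i=1}^n(\alpha_{i,0}x-\alpha_{i,1}y)$ and $f_{n-2}(x,y)=\prod_{m=1}^{n-2}(\beta_{m,0}x-\beta_{m,1}y)$. For $(n,r)=(2,2)$ one has $DR_{2,2}(f_2,f_0)=f_0^2$, where $f_0$ is the constant binary form of degree $0$. For every other pair $(n,r)$ the following identity holds in $R$: $$DR_{n,r}(f_n,f_{n-2})=\sum_{\substack{I\sqcup J=[n]\\ |I|=r}}\left(\prod_{\substack{j\in J\\ i\in[n]\setminus\{j\}}}[\alpha_i,\alpha_j]\cdot\prod_{\substack{i\in I\\ m\in[n-2]}}[\beta_m,\alpha_i]\right),$$ where $[N]=\{1,\dots,N\}$ and the sum runs over all ordered decompositions of $[n]$ into disjoint subsets $I,J$ with $|I|=r$.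
   Context: Let $k$ be a field of characteristic zero. For pairs of elements $\sigma=(\sigma_0,\sigma_1)$, $\tau=(\tau_0,\tau_1)$ of a commutative ring (written $\alpha_i=(\alpha_{i,0},\alpha_{i,1})$, $\beta_m=(\beta_{m,0},\beta_{m,1})$), the bracket is $[\sigma,\tau]:=\sigma_0\tau_1-\tau_0\sigma_1$. Resultant convention: if $f=\prod_{i=1}^d(\gamma_{i,0}x-\gamma_{i,1}y)$ and $g=\prod_{j=1}^e(\delta_{j,0}x-\delta_{j,1}y)$ are binary forms of degrees $d,e$, then $\mathrm{res}(f,g)=\prod_{i=1}^d\prod_{j=1}^e[\gamma_i,\delta_j]$; this is a polynomial in the coefficients of $f$ and $g$ (the classical resultant of binary forms), and it is used for forms with coefficients in any commutative $k$-algebra. Discriminant-resultants: for $n\ge2$, write a binary form of degree $n$ as $f(x,y)=\sum_{i=0}^n a_ix^iy^{n-i}$ and let $g$ be a binary form of degree $n-2$. The polynomials $DR_{n,r}(f,g)$ ($0\le r\le n$) in the coefficients of $f,g$ are defined by $$\sum_{r=0}^n DR_{n,r}(f,g)\,t^r=\mathrm{res}\big(f(x,y),\,x\partial_xf(x,y)+t\,xy\,g(x,y)\big)/(a_0a_n),$$ where $t$ is an indeterminate, the second argument is regarded as a binary form of degree $n$ with coefficients in $k[t]$, and the division by $a_0a_n$ is exact. $DR_{n,r}$ is bihomogeneous of degree $2n-2-r$ in the coefficients of $f$ and degree $r$ in those of $g$. *)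

theory Defs
  imports "HOL-Computational_Algebra.Polynomial" "Jordan_Normal_Form.Determinant"
begin

definition bracket :: "'a::comm_ring_1 \<times> 'a \<Rightarrow> 'a \<times> 'a \<Rightarrow> 'a" where
  "bracket s t = fst s * snd t - fst t * snd s"

text \<open>A binary form of (formal) degree d, sum_i a_i x^i y^(d-i), is represented by the
  univariate polynomial F with coeff F i = a_i (i.e. its dehomogenisation at y = 1);
  the formal degree d is passed separately.
  The linear form s0 x - s1 y is represented by [:-s1, s0:].\<close>
definition lin_form :: "'a::comm_ring_1 \<times> 'a \<Rightarrow> 'a poly" where
  "lin_form s = [: - snd s, fst s :]"

text \<open>Classical resultant of binary forms of formal degrees d and e (Sylvester determinant),
  normalised so that res(prod_i (g_i0 x - g_i1 y), prod_j (h_j0 x - h_j1 y)) = prod_{i,j} [g_i,h_j].\<close>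
definition res_form :: "nat \<Rightarrow> nat \<Rightarrow> 'a::comm_ring_1 poly \<Rightarrow> 'a poly \<Rightarrow> 'a" where
  "res_form d e F G = det (mat (d + e) (d + e) (\<lambda>(i, j).
      if i < e then (if i \<le> j \<and> j - i \<le> d then coeff F (j - i) else 0)
      else (if i - e \<le> j \<and> j - (i - e) \<le> e then coeff G (j - (i - e)) else 0)))"

text \<open>The degree-n form x d/dx f + t x y g with coefficients in k[t] (t = the poly variable).\<close>
definition DR_second :: "'a::idom poly \<Rightarrow> 'a poly \<Rightarrow> 'a poly poly" where
  "DR_second F G = map_poly (\<lambda>c. [:c:]) (pCons 0 (pderiv F))
      + smult [:0, 1:] (map_poly (\<lambda>c. [:c:]) (pCons 0 G))"

text \<open>sum_r DR_{n,r}(f,g) t^r = res(f, x f_x + t x y g) / (a_0 a_n) (exact division).\<close>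
definition DR_poly :: "nat \<Rightarrow> 'a::idom poly \<Rightarrow> 'a poly \<Rightarrow> 'a poly" where
  "DR_poly n F G = (THE P. smult (coeff F 0 * coeff F n) P
      = res_form n n (map_poly (\<lambda>c. [:c:]) F) (DR_second F G))"

definition DR :: "nat \<Rightarrow> nat \<Rightarrow> 'a::idom poly \<Rightarrow> 'a poly \<Rightarrow> 'a" where
  "DR n r F G = coeff (DR_poly n F G) r"

end

theory Submission
  imports Defs
begin

definition rowmat :: "nat \<Rightarrow> nat \<Rightarrow> (nat \<Rightarrow> 'a::comm_ring_1 poly) \<Rightarrow> 'a mat" where
  "rowmat K N p = mat K N (\<lambda>(i,j). coeff (p i) j)"

lemma rowmat_carrier[simp]: "rowmat K N p \<in> carrier_mat K N"
  by (simp add: rowmat_def)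
lemma rowmat_dim[simp]: "dim_row (rowmat K N p) = K" "dim_col (rowmat K N p) = N"
  by (simp_all add: rowmat_def)
lemma rowmat_index[simp]: "i < K \<Longrightarrow> j < N \<Longrightarrow> rowmat K N p $$ (i,j) = coeff (p i) j"
  by (simp add: rowmat_def)

lemma rowmat_cong: "(\<And>i. i < K \<Longrightarrow> p i = p' i) \<Longrightarrow> rowmat K N p = rowmat K N p'"
  by (rule eq_matI) auto

lemma rowmat_mult:
  "rowmat K N a * rowmat N M b = rowmat K M (\<lambda>i. \<Sum>k<N. smult (coeff (a i) k) (b k))"
proof (rule eq_matI)
  fix i j assume "i < dim_row (rowmat K M (\<lambda>i. \<Sum>k<N. smult (coeff (a i) k) (b k)))"
     "j < dim_col (rowmat K M (\<lambda>i. \<Sum>k<N. smult (coeff (a i) k) (b k)))"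
  then have i: "i<K" and j: "j<M" by auto
  have "(rowmat K N a * rowmat N M b) $$ (i, j) = (\<Sum>k<N. coeff (a i) k * coeff (b k) j)"
    using i j by (auto simp add: scalar_prod_def atLeast0LessThan intro!: sum.cong)
  then show "(rowmat K N a * rowmat N M b) $$ (i, j) = rowmat K M (\<lambda>i. \<Sum>k<N. smult (coeff (a i) k) (b k)) $$ (i, j)"
    using i j by (simp add: coeff_sum)
qed auto

lemma sum_smult_monom: "i < N \<Longrightarrow> (\<Sum>k<N. smult (coeff (monom c i) k) (b k)) = smult c (b i)"
proof -
  assume i: "i < N"
  have "(\<Sum>k<N. smult (coeff (monom c i) k) (b k)) = (\<Sum>k<N. if i = k then smult c (b k) else 0)"
    by (intro sum.cong) auto
  also have "\<dots> = smult c (b i)" using i by (simp add: sum.delta)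
  finally show ?thesis .
qed

lemma sum_smult_add: "(\<Sum>k<N. smult (coeff (p + q) k) (b k)) = (\<Sum>k<N. smult (coeff p k) (b k)) + (\<Sum>k<N. smult (coeff q k) (b k))"
  by (simp add: smult_add_left sum.distrib)

lemma sum_monom_coeff: "(\<And>i. M \<le> i \<Longrightarrow> coeff p i = 0) \<Longrightarrow> (\<Sum>i<M. monom (coeff p i) i) = p"
proof -
  assume z: "\<And>i. M \<le> i \<Longrightarrow> coeff p i = 0"
  show ?thesis
  proof (rule poly_eqI)
    fix n
    have "coeff (\<Sum>i<M. monom (coeff p i) i) n = (\<Sum>i<M. if i = n then coeff p i else 0)"
      by (simp add: coeff_sum)
    also have "\<dots> = (if n < M then coeff p n else 0)" by (simp add: sum.delta')
    also have "\<dots> = coeff p n" using z[of n] by auto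
    finally show "coeff (\<Sum>i<M. monom (coeff p i) i) n = coeff p n" .
  qed
qed

lemma sum_smult_bp:
  fixes L p :: "'a::comm_ring_1 poly"
  assumes z: "\<And>i. M \<le> i \<Longrightarrow> coeff p i = 0"
  shows "(\<Sum>k<Suc M. smult (coeff (pCons c p) k) (if k = 0 then 1 else monom 1 (k-1) * L)) = [:c:] + L * p"
proof -
  have "(\<Sum>k<Suc M. smult (coeff (pCons c p) k) (if k = 0 then 1 else monom 1 (k-1) * L))
     = [:c:] + (\<Sum>k<M. smult (coeff p k) (monom 1 k * L))"
    by (subst sum.lessThan_Suc_shift) simp
  also have "(\<Sum>k<M. smult (coeff p k) (monom 1 k * L)) = (\<Sum>k<M. monom (coeff p k) k) * L"
    by (simp only: sum_distrib_right mult_smult_left[symmetric] smult_monom mult.right_neutral)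
  also have "\<dots> = p * L" using sum_monom_coeff[OF z] by simp
  finally show ?thesis by (simp add: mult.commute)
qed

lemma prod_pattern:
  "(\<Prod>i<Suc d + e. if i < e then 1 else if i = e then c else a) = (c::'a::comm_monoid_mult) * a^d"
proof (induction d)
  case 0
  have "(\<Prod>i<e. if i < e then 1 else if i = e then c else a) = 1"
    by (intro prod.neutral) auto
  then show ?case by simp
next
  case (Suc d)
  then show ?case by (simp add: mult_ac)
qed

definition hom :: "nat \<Rightarrow> 'a::comm_ring_1 poly \<Rightarrow> 'a \<times> 'a \<Rightarrow> 'a" where
  "hom e H g = (\<Sum>m\<le>e. coeff H m * snd g ^ m * fst g ^ (e - m))"

lemma res_form_rowmat:
  assumes dF: "degree F \<le> d" and dH: "degree H \<le> e"
  shows "res_form d e F H = det (rowmat (d+e) (d+e) (\<lambda>i. if i < e then monom 1 i * F else monom 1 (i-e) * H))"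
  unfolding res_form_def
proof (intro arg_cong[where f=det] eq_matI)
  fix i j assume "i < dim_row (rowmat (d+e) (d+e) (\<lambda>i. if i < e then monom 1 i * F else monom 1 (i-e) * H))"
    "j < dim_col (rowmat (d+e) (d+e) (\<lambda>i. if i < e then monom 1 i * F else monom 1 (i-e) * H))"
  then have i: "i < d+e" and j: "j < d+e" by auto
  show "mat (d + e) (d + e) (\<lambda>(i, j). if i < e then if i \<le> j \<and> j - i \<le> d then coeff F (j - i) else 0
            else if i - e \<le> j \<and> j - (i - e) \<le> e then coeff H (j - (i - e)) else 0) $$ (i, j) =
         rowmat (d + e) (d + e) (\<lambda>i. if i < e then monom 1 i * F else monom 1 (i - e) * H) $$ (i, j)"
    using i j dF dH by (auto simp: coeff_monom_mult coeff_eq_0)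
qed auto

lemma div_lin:
  fixes g :: "'a::comm_ring_1 \<times> 'a" and H :: "'a poly"
  assumes dH: "degree H \<le> e"
  shows "\<exists>q. smult (fst g ^ e) H = [:hom e H g:] + lin_form g * q"
proof -
  define a0 a1 where "a0 = fst g" and "a1 = snd g"
  define X where "X = [:0, a0:]"
  define Y where "Y = [:a1:]"
  have Lxy: "lin_form g = X - Y" by (simp add: lin_form_def X_def Y_def a0_def a1_def)
  have X1: "X = monom a0 1" by (simp add: X_def monom_Suc monom_0)
  have Xm: "\<And>m. X^m = monom (a0^m) m" by (simp add: X1 monom_power)
  have eq: "smult (a0 ^ e) H - [:hom e H g:] = (\<Sum>m\<le>e. smult (coeff H m * a0^(e-m)) (X^m - Y^m))"
  proof (rule poly_eqI)
    fix n
    have "coeff (\<Sum>m\<le>e. smult (coeff H m * a0^(e-m)) (X^m - Y^m)) n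
       = (\<Sum>m\<le>e. (if m = n then coeff H m * a0^e else 0) - (if n = 0 then coeff H m * a1^m * a0^(e-m) else 0))"
    proof (unfold coeff_sum, intro sum.cong refl)
      fix m assume m: "m \<in> {..e}"
      then have pw: "a0^e = a0^(e-m) * a0^m" by (simp add: power_add[symmetric])
      have c1: "coeff (X^m) n = (if m = n then a0^m else 0)" by (simp add: Xm)
      have c2: "coeff (Y^m) n = (if n = 0 then a1^m else 0)"
        by (cases n) (simp_all add: Y_def poly_const_pow)
      show "coeff (smult (coeff H m * a0 ^ (e - m)) (X ^ m - Y ^ m)) n =
         (if m = n then coeff H m * a0 ^ e else 0) - (if n = 0 then coeff H m * a1 ^ m * a0 ^ (e - m) else 0)"
        by (simp add: c1 c2 right_diff_distrib) (metis pw mult.assoc mult.commute)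
    qed
    also have "\<dots> = (\<Sum>m\<le>e. (if m = n then coeff H m * a0^e else 0)) - (if n = 0 then hom e H g else 0)"
      by (cases n) (simp_all add: sum_subtractf hom_def a0_def a1_def)
    also have "(\<Sum>m\<le>e. (if m = n then coeff H m * a0^e else 0)) = coeff H n * a0^e"
      using dH by (auto simp: sum.delta' coeff_eq_0)
    finally show "coeff (smult (a0 ^ e) H - [:hom e H g:]) n = coeff (\<Sum>m\<le>e. smult (coeff H m * a0^(e-m)) (X^m - Y^m)) n"
      by (cases n) (simp_all add: mult_ac)
  qed
  have "lin_form g dvd (\<Sum>m\<le>e. smult (coeff H m * a0^(e-m)) (X^m - Y^m))"
  proof (intro dvd_sum dvd_smult)
    fix m show "lin_form g dvd X^m - Y^m" unfolding Lxy power_diff_sumr2 by simp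
  qed
  then obtain q where "(\<Sum>m\<le>e. smult (coeff H m * a0^(e-m)) (X^m - Y^m)) = lin_form g * q"
    by (elim dvdE)
  with eq have "smult (a0 ^ e) H = [:hom e H g:] + lin_form g * q" by (simp add: algebra_simps)
  then show ?thesis unfolding a0_def by blast
qed

lemma res_step:
  fixes g :: "'b::idom \<times> 'b" and F1 H :: "'b poly"
  assumes a0: "fst g \<noteq> 0" and dF: "degree F1 \<le> d" and dH: "degree H \<le> e"
  shows "res_form (Suc d) e (lin_form g * F1) H = (-1)^e * hom e H g * res_form d e F1 H"
proof -
  define a0 a1 where "a0 = fst g" and "a1 = snd g"
  define L where "L = lin_form g"
  have L: "L = [:-a1, a0:]" by (simp add: L_def lin_form_def a0_def a1_def)
  have Lnz: "L \<noteq> 0" and degL: "degree L = 1" using a0 by (auto simp: L a0_def)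
  define N where "N = Suc d + e"
  define F where "F = L * F1"
  have dF': "degree F \<le> Suc d"
    using degree_mult_le[of L F1] degL dF unfolding F_def by simp
  define \<rho> where "\<rho> = hom e H g"
  obtain q where q: "smult (a0^e) H = [:\<rho>:] + L * q"
    using div_lin[OF dH, of g] unfolding \<rho>_def L_def a0_def by blast
  have qz: "\<And>k. d + e \<le> k \<Longrightarrow> coeff q k = 0"
  proof -
    fix k assume k: "d + e \<le> k"
    show "coeff q k = 0"
    proof (cases "q = 0")
      case False
      have "L * q = smult (a0^e) H - [:\<rho>:]" using q by simp
      then have "degree (L * q) \<le> e"
        using dH by (metis degree_diff_le degree_pCons_0 degree_smult_le le_zero_eq order.trans zero_le)
      then have "degree q < e" using False Lnz degL by (simp add: degree_mult_eq)
      then show ?thesis using k by (intro coeff_eq_0) simp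
    qed simp
  qed
  define sp where "sp = (\<lambda>i. if i < e then monom 1 i * F else monom 1 (i-e) * H)"
  define sp1 where "sp1 = (\<lambda>i. if i < e then monom 1 i * F1 else monom 1 (i-e) * H)"
  define dp where "dp = (\<lambda>i. if i < e then monom 1 i else if i = e then monom (a0^e) e
                          else monom (-a1) (i-1) + monom a0 i)"
  define tp where "tp = (\<lambda>i. if i < e then pCons 0 (monom 1 i * F1) else if i = e then pCons \<rho> q
                          else pCons 0 (monom 1 (i-e-1) * H))"
  define bp where "bp = (\<lambda>k. if k = 0 then 1 else monom 1 (k-1) * L)"
  define S where "S = rowmat N N sp"
  define D where "D = rowmat N N dp"
  define T where "T = rowmat N N tp"
  define B where "B = rowmat N N bp"
  have resS: "res_form (Suc d) e F H = det S"
    using res_form_rowmat[OF dF' dH] unfolding S_def N_def sp_def by simp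
  have resS1: "res_form d e F1 H = det (rowmat (d+e) (d+e) sp1)"
    using res_form_rowmat[OF dF dH] unfolding sp1_def by simp
  have DS: "D * S = T * B"
    unfolding D_def S_def T_def B_def rowmat_mult
  proof (rule rowmat_cong)
    fix i assume i: "i < N"
    have Nsuc: "N = Suc (d + e)" by (simp add: N_def)
    have bpsum: "\<And>c p. (\<And>k. d + e \<le> k \<Longrightarrow> coeff p k = 0) \<Longrightarrow>
       (\<Sum>k<N. smult (coeff (pCons c p) k) (bp k)) = [:c:] + L * p"
      unfolding Nsuc bp_def by (rule sum_smult_bp)
    show "(\<Sum>k<N. smult (coeff (dp i) k) (sp k)) = (\<Sum>k<N. smult (coeff (tp i) k) (bp k))"
    proof (cases "i < e")
      case True
      have z: "\<And>k. d + e \<le> k \<Longrightarrow> coeff (monom 1 i * F1) k = 0"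
        using True dF by (auto simp: coeff_monom_mult intro!: coeff_eq_0)
      have "(\<Sum>k<N. smult (coeff (dp i) k) (sp k)) = smult 1 (sp i)"
        using True i unfolding dp_def by (simp only: if_True sum_smult_monom)
      moreover have "tp i = pCons 0 (monom 1 i * F1)" using True by (simp add: tp_def)
      then have "(\<Sum>k<N. smult (coeff (tp i) k) (bp k)) = [:0:] + L * (monom 1 i * F1)"
        using bpsum[OF z] by simp
      ultimately show ?thesis using True
        by (simp add: sp_def F_def algebra_simps)
    next
      case False
      show ?thesis
      proof (cases "i = e")
        case True
        have dpi: "dp e = monom (a0^e) e" by (simp add: dp_def)
        have eN: "e < N" using True i by simp
        have "(\<Sum>k<N. smult (coeff (dp i) k) (sp k)) = smult (a0^e) (sp i)"
          unfolding True dpi using eN by (rule sum_smult_monom)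
        moreover have "tp i = pCons \<rho> q" using True by (simp add: tp_def)
        then have "(\<Sum>k<N. smult (coeff (tp i) k) (bp k)) = [:\<rho>:] + L * q"
          using bpsum[OF qz] by simp
        ultimately show ?thesis using True
          by (simp add: sp_def q)
      next
        case False2: False
        with False obtain m where m: "i = Suc (e + m)" by (metis add_Suc_right less_imp_Suc_add linorder_neqE_nat)
        have md: "m < d" using i m N_def by simp
        have z: "\<And>k. d + e \<le> k \<Longrightarrow> coeff (monom 1 m * H) k = 0"
          using md dH by (auto simp: coeff_monom_mult intro!: coeff_eq_0)
        have "(\<Sum>k<N. smult (coeff (dp i) k) (sp k)) = smult (-a1) (sp (e+m)) + smult a0 (sp (Suc (e+m)))"
        proof -
          have dpi: "dp i = monom (-a1) (e+m) + monom a0 (Suc (e+m))" using m by (simp add: dp_def)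
          have i1: "e + m < N" "Suc (e+m) < N" using i m by auto
          show ?thesis unfolding dpi sum_smult_add sum_smult_monom[OF i1(1)] sum_smult_monom[OF i1(2)] ..
        qed
        also have "\<dots> = L * (monom 1 m * H)"
          by (simp add: sp_def L mult_pCons_left monom_Suc algebra_simps)
        moreover have "tp i = pCons 0 (monom 1 m * H)" using m by (simp add: tp_def)
        then have "(\<Sum>k<N. smult (coeff (tp i) k) (bp k)) = [:0:] + L * (monom 1 m * H)"
          using bpsum[OF z] by simp
        ultimately show ?thesis by simp
      qed
    qed
  qed
  have pl: "\<And>f n. prod_list (map f [0..<n]) = (\<Prod>i<n. f i)"
    by (metis atLeast0LessThan distinct_upt prod.distinct_set_conv_list set_upt)
  have detD: "det D = a0^e * a0^d"
  proof -
    have "det D = prod_list (diag_mat D)"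
      by (rule det_lower_triangular[of N]) (auto simp: D_def dp_def)
    also have "\<dots> = (\<Prod>i<N. if i < e then 1 else if i = e then a0^e else a0)"
      by (auto simp add: diag_mat_def D_def pl dp_def intro!: prod.cong)
    also have "\<dots> = a0^e * a0^d" unfolding N_def by (rule prod_pattern)
    finally show ?thesis .
  qed
  have detB: "det B = a0^(d+e)"
  proof -
    have cL1: "\<And>x. 0 < x \<Longrightarrow> coeff L (x - (x - 1)) = a0" by (simp add: L)
    have "det B = prod_list (diag_mat B)"
    proof (rule det_lower_triangular[of N])
      fix i j assume ij: "i < j" "j < N"
      show "B $$ (i, j) = 0"
      proof (cases i)
        case 0 then show ?thesis using ij by (simp add: B_def bp_def)
      next
        case (Suc i')
        have "coeff L (j - i') = 0" by (rule coeff_eq_0) (use degL ij Suc in simp)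
        then show ?thesis using ij Suc by (simp add: B_def bp_def coeff_monom_mult)
      qed
    qed (simp add: B_def)
    also have "\<dots> = (\<Prod>i<N. if i < 0 then 1 else if i = 0 then 1 else a0)"
      using cL1 by (auto simp add: diag_mat_def B_def pl bp_def coeff_monom_mult intro!: prod.cong)
    also have "\<dots> = a0^(d+e)" using prod_pattern[where d="d+e" and e=0 and c=1 and a=a0] by (simp add: N_def)
    finally show ?thesis .
  qed
  have mdel: "mat_delete T e 0 = rowmat (d+e) (d+e) sp1"
  proof (rule eq_matI)
    fix i j assume "i < dim_row (rowmat (d+e) (d+e) sp1)" "j < dim_col (rowmat (d+e) (d+e) sp1)"
    then have i: "i < d+e" and j: "j < d+e" by auto
    show "mat_delete T e 0 $$ (i, j) = rowmat (d + e) (d + e) sp1 $$ (i, j)"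
      using i j by (auto simp: mat_delete_def T_def N_def tp_def sp1_def)
  qed (auto simp: mat_delete_def T_def N_def)
  have detT: "det T = (-1)^e * \<rho> * det (rowmat (d+e) (d+e) sp1)"
  proof -
    have "det T = (\<Sum>i<N. T $$ (i,0) * cofactor T i 0)"
      by (rule laplace_expansion_column[of _ N]) (auto simp: T_def N_def)
    also have "\<dots> = (\<Sum>i<N. if i = e then \<rho> * cofactor T e 0 else 0)"
      by (intro sum.cong) (auto simp: T_def tp_def)
    also have "\<dots> = \<rho> * cofactor T e 0" by (simp add: N_def)
    also have "\<dots> = (-1)^e * \<rho> * det (rowmat (d+e) (d+e) sp1)"
      by (simp add: cofactor_def mdel)
    finally show ?thesis .
  qed
  have "det D * det S = det T * det B"
    using det_mult[of D N S] det_mult[of T N B] DS by (simp add: D_def S_def T_def B_def)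
  then have "a0^(d+e) * det S = a0^(d+e) * ((-1)^e * \<rho> * det (rowmat (d+e) (d+e) sp1))"
    by (simp add: detD detT detB power_add mult_ac)
  then have "det S = (-1)^e * \<rho> * det (rowmat (d+e) (d+e) sp1)"
    using a0 by (simp add: a0_def)
  then show ?thesis using resS resS1 by (simp add: F_def L_def \<rho>_def)
qed

lemma deg_prod_lin: "finite A \<Longrightarrow> degree (\<Prod>i\<in>A. lin_form (g i)) \<le> card A"
proof -
  assume A: "finite A"
  have "degree (\<Prod>i\<in>A. lin_form (g i)) \<le> (\<Sum>i\<in>A. degree (lin_form (g i)))"
    using degree_prod_sum_le[OF A] by (simp add: o_def)
  also have "\<dots> \<le> (\<Sum>i\<in>A. 1)" by (intro sum_mono) (simp add: lin_form_def)
  finally show ?thesis by simp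
qed

lemma res_prod:
  fixes g :: "nat \<Rightarrow> 'b::idom \<times> 'b" and H :: "'b poly"
  assumes "finite A" "\<forall>i\<in>A. fst (g i) \<noteq> 0" "degree H \<le> e"
  shows "res_form (card A) e (\<Prod>i\<in>A. lin_form (g i)) H = (\<Prod>i\<in>A. (-1)^e * hom e H (g i))"
  using assms
proof (induction A rule: finite_induct)
  case empty
  have "res_form 0 e 1 H = det (1\<^sub>m e)" unfolding res_form_def
    by (intro arg_cong[where f=det] eq_matI) auto
  then show ?case by simp
next
  case (insert a A)
  have "res_form (card (insert a A)) e (\<Prod>i\<in>insert a A. lin_form (g i)) H
     = res_form (Suc (card A)) e (lin_form (g a) * (\<Prod>i\<in>A. lin_form (g i))) H"
    using insert by simp
  also have "\<dots> = (-1)^e * hom e H (g a) * res_form (card A) e (\<Prod>i\<in>A. lin_form (g i)) H"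
    by (rule res_step) (use insert deg_prod_lin in auto)
  also have "\<dots> = (\<Prod>i\<in>insert a A. (-1)^e * hom e H (g i))" using insert by (simp add: mult_ac)
  finally show ?case .
qed

lemma hom_add: "hom e (p + q) g = hom e p g + hom e q g"
  by (simp add: hom_def algebra_simps sum.distrib)
lemma hom_smult: "hom e (smult c p) g = c * hom e p g"
  by (simp add: hom_def sum_distrib_left mult_ac)
lemma hom_zero: "hom e 0 g = 0" by (simp add: hom_def)
lemma hom_sum: "hom e (\<Sum>i\<in>S. f i) g = (\<Sum>i\<in>S. hom e (f i) g)"
  by (induction S rule: infinite_finite_induct) (simp_all add: hom_add hom_zero)
lemma hom_Suc_deg: assumes "degree p \<le> k" shows "hom (Suc k) p g = fst g * hom k p g"
proof -
  have "hom (Suc k) p g = (\<Sum>m\<le>k. coeff p m * snd g ^ m * fst g ^ (Suc k - m))"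
    using coeff_eq_0[of p "Suc k"] assms by (simp add: hom_def)
  also have "\<dots> = fst g * hom k p g"
    by (auto simp: hom_def sum_distrib_left Suc_diff_le mult_ac intro!: sum.cong)
  finally show ?thesis .
qed
lemma hom_pCons0: "hom (Suc k) (pCons 0 p) g = snd g * hom k p g"
  unfolding hom_def sum.atMost_Suc_shift by (simp add: sum_distrib_left mult_ac)
lemma hom_lin_mult: assumes "degree p \<le> k"
  shows "hom (Suc k) (lin_form b * p) g = bracket b g * hom k p g"
proof -
  have e1: "lin_form b * p = smult (- snd b) p + pCons 0 (smult (fst b) p)" by (simp add: lin_form_def)
  show ?thesis unfolding e1 hom_add hom_smult hom_pCons0 using assms
    by (simp add: hom_Suc_deg bracket_def algebra_simps)
qed
lemma hom_prod: "finite A \<Longrightarrow> hom (card A) (\<Prod>i\<in>A. lin_form (b i)) g = (\<Prod>i\<in>A. bracket (b i) g)"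
proof (induction A rule: finite_induct)
  case empty then show ?case by (simp add: hom_def)
next
  case (insert a A)
  then show ?case using deg_prod_lin[OF insert(1), of b] by (simp add: hom_lin_mult)
qed

lemma lift_lin_mult:
  "map_poly (\<lambda>c. [:c:]) (lin_form a * p) = lin_form ([:fst a:], [:snd a:]) * map_poly (\<lambda>c. [:c:]) p"
proof -
  have e1: "lin_form a * p = smult (- snd a) p + pCons 0 (smult (fst a) p)" by (simp add: lin_form_def)
  show ?thesis unfolding e1
    by (rule poly_eqI) (simp add: coeff_map_poly lin_form_def coeff_pCons split: nat.split)
qed

lemma lift_prod: "map_poly (\<lambda>c. [:c:]) (\<Prod>i\<in>A. lin_form (a i)) = (\<Prod>i\<in>A. lin_form ([:fst (a i):], [:snd (a i):]))"
  by (induction A rule: infinite_finite_induct) (simp_all add: lift_lin_mult map_poly_pCons one_pCons)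

lemma const_sum: "(\<Sum>i\<in>S. [:f i:]) = [:sum f S:]"
  by (induction S rule: infinite_finite_induct) auto

lemma hom_lift: "hom e (map_poly (\<lambda>c. [:c:]) p) ([:x:],[:y:]) = [:hom e p (x,y):]"
  by (simp add: hom_def coeff_map_poly poly_const_pow const_sum mult_ac)

lemma prod_smult: "(\<Prod>i\<in>A. smult (c i) (p i)) = smult (\<Prod>i\<in>A. c i) (\<Prod>i\<in>A. p i)"
  by (induction A rule: infinite_finite_induct) (simp_all add: mult_ac)

lemma negone_smult: "(-1::'b::comm_ring_1 poly)^e * smult c p = smult ((-1)^e * c) p"
  by (induction e) auto

lemma coeff_prod_lin:
  fixes p q :: "'i \<Rightarrow> 'a::comm_ring_1" and A :: "'i set"
  assumes A: "finite A"
  shows "coeff (\<Prod>j\<in>A. [:p j, q j:]) r = (\<Sum>I\<in>{I. I \<subseteq> A \<and> card I = r}. (\<Prod>j\<in>A - I. p j) * (\<Prod>i\<in>I. q i))"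
proof -
  have mp: "\<And>X. finite X \<Longrightarrow> (\<Prod>x\<in>X. monom (q x) 1) = monom (\<Prod>x\<in>X. q x) (card X)"
  proof -
    fix X :: "'i set" assume "finite X"
    then show "(\<Prod>x\<in>X. monom (q x) 1) = monom (\<Prod>x\<in>X. q x) (card X)"
      by (induction X rule: finite_induct) (simp_all add: mult_monom monom_0 one_pCons)
  qed
  have cp: "\<And>X. (\<Prod>x\<in>X. [:p x:]) = [:\<Prod>x\<in>X. p x:]"
  proof -
    fix X :: "'i set"
    show "(\<Prod>x\<in>X. [:p x:]) = [:\<Prod>x\<in>X. p x:]"
      by (induction X rule: infinite_finite_induct) (simp_all add: one_pCons)
  qed
  have "(\<Prod>j\<in>A. [:p j, q j:]) = (\<Prod>j\<in>A. monom (q j) 1 + [:p j:])"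
    by (intro prod.cong refl) (simp add: monom_Suc monom_0)
  also have "\<dots> = (\<Sum>X\<in>Pow A. (\<Prod>x\<in>X. monom (q x) 1) * (\<Prod>x\<in>A - X. [:p x:]))"
    by (rule prod_add[OF A])
  also have "\<dots> = (\<Sum>X\<in>Pow A. monom ((\<Prod>x\<in>X. q x) * (\<Prod>x\<in>A - X. p x)) (card X))"
  proof (intro sum.cong refl)
    fix X assume "X \<in> Pow A"
    then have X: "finite X" using A finite_subset by auto
    have mc: "\<And>a k b. monom a k * [:b:] = monom (a*b) k" by (metis monom_0 mult_monom add_0_right)
    show "(\<Prod>x\<in>X. monom (q x) 1) * (\<Prod>x\<in>A - X. [:p x:]) = monom ((\<Prod>x\<in>X. q x) * (\<Prod>x\<in>A - X. p x)) (card X)"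
      by (simp only: mp[OF X] cp mc)
  qed
  finally have "coeff (\<Prod>j\<in>A. [:p j, q j:]) r
      = (\<Sum>X\<in>Pow A. if card X = r then (\<Prod>x\<in>X. q x) * (\<Prod>x\<in>A - X. p x) else 0)"
    by (simp add: coeff_sum)
  also have "\<dots> = (\<Sum>X\<in>{I. I \<subseteq> A \<and> card I = r}. (\<Prod>x\<in>X. q x) * (\<Prod>x\<in>A - X. p x))"
  proof -
    have st: "{I. I \<subseteq> A \<and> card I = r} = {X\<in>Pow A. card X = r}" by auto
    show ?thesis unfolding st by (rule sum.inter_filter[symmetric]) (simp add: A)
  qed
  finally show ?thesis by (simp add: mult_ac)
qed

theorem theorem2p1:
  fixes \<alpha> \<beta> :: "nat \<Rightarrow> 'a::{idom, ring_char_0} \<times> 'a" and n r :: nat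
  assumes "n \<ge> 2" and "r \<le> n"
    and "\<forall>i\<in>{1..n}. fst (\<alpha> i) \<noteq> 0 \<and> snd (\<alpha> i) \<noteq> 0"
  shows "let F = (\<Prod>i=1..n. lin_form (\<alpha> i));
             G = (\<Prod>m=1..n-2. lin_form (\<beta> m))
         in (if n = 2 \<and> r = 2 then DR n r F G = (coeff G 0)^2
             else DR n r F G =
               (\<Sum>I\<in>{I. I \<subseteq> {1..n} \<and> card I = r}.
                  (\<Prod>j\<in>{1..n} - I. \<Prod>i\<in>{1..n} - {j}. bracket (\<alpha> i) (\<alpha> j)) *
                  (\<Prod>i\<in>I. \<Prod>m\<in>{1..n-2}. bracket (\<beta> m) (\<alpha> i))))"
proof -
  define A where "A = {1..n}"
  define F where "F = (\<Prod>i\<in>A. lin_form (\<alpha> i))"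
  define G where "G = (\<Prod>m\<in>{1..n-2}. lin_form (\<beta> m))"
  define P where "P = (\<lambda>j. \<Prod>i\<in>A - {j}. bracket (\<alpha> i) (\<alpha> j))"
  define Q where "Q = (\<lambda>j. \<Prod>m\<in>{1..n-2}. bracket (\<beta> m) (\<alpha> j))"
  define H where "H = DR_second F G"
  define \<alpha>' where "\<alpha>' = (\<lambda>i. ([:fst (\<alpha> i):], [:snd (\<alpha> i):]))"
  have fA: "finite A" and cA: "card A = n" by (simp_all add: A_def)
  have nz: "\<And>i. i \<in> A \<Longrightarrow> fst (\<alpha> i) \<noteq> 0 \<and> snd (\<alpha> i) \<noteq> 0" using assms(3) by (simp add: A_def)
  have degF: "degree F \<le> n" using deg_prod_lin[OF fA, of \<alpha>] cA by (simp add: F_def)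
  have degG: "degree G \<le> n - 2" using deg_prod_lin[of "{1..n-2}" \<beta>] by (simp add: G_def)
  have e1: "n = Suc (n - 1)" and e2: "n - 1 = Suc (n - 2)" using assms(1) by arith+
  have degH: "degree H \<le> n"
  proof -
    have d1: "degree (pCons 0 (pderiv F)) \<le> n"
      using degree_pCons_le[of 0 "pderiv F"] degree_pderiv[of F] degF assms(1) by linarith
    have d2: "degree (pCons 0 G) \<le> n"
      using degree_pCons_le[of 0 G] degG assms(1) by linarith
    have "degree H \<le> max (degree (map_poly (\<lambda>c. [:c:]) (pCons 0 (pderiv F))))
        (degree (smult [:0,1:] (map_poly (\<lambda>c. [:c:]) (pCons 0 G))))"
      unfolding H_def DR_second_def by (rule degree_add_le_max)
    moreover have "degree (map_poly (\<lambda>c. [:c:]) (pCons 0 (pderiv F))) = degree (pCons 0 (pderiv F))"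
      by (rule degree_map_poly) simp
    moreover have "degree (map_poly (\<lambda>c. [:c:]) (pCons 0 G)) = degree (pCons 0 G)"
      by (rule degree_map_poly) simp
    moreover have "degree (smult [:0,1:] (map_poly (\<lambda>c. [:c:]) (pCons 0 G))) \<le> degree (map_poly (\<lambda>c. [:c:]) (pCons 0 G))"
      by (rule degree_smult_le)
    ultimately show ?thesis using d1 d2 by (simp add: max_def split: if_splits)
  qed
  have dPC: "\<And>a. pderiv (lin_form a) = [:fst a:]" by (simp add: lin_form_def pderiv_pCons)
  have brzero: "\<And>x. bracket x x = 0" by (simp add: bracket_def mult.commute)
  have pdF: "pderiv F = (\<Sum>k\<in>A. smult (fst (\<alpha> k)) (\<Prod>i\<in>A - {k}. lin_form (\<alpha> i)))"
    by (simp add: F_def pderiv_prod dPC)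
  have homF': "\<And>j. j \<in> A \<Longrightarrow> hom (n-1) (pderiv F) (\<alpha> j) = fst (\<alpha> j) * P j"
  proof -
    fix j assume j: "j \<in> A"
    have "hom (n-1) (pderiv F) (\<alpha> j) = (\<Sum>k\<in>A. fst (\<alpha> k) * hom (n-1) (\<Prod>i\<in>A - {k}. lin_form (\<alpha> i)) (\<alpha> j))"
      by (simp add: pdF hom_sum hom_smult)
    also have "\<dots> = (\<Sum>k\<in>A. fst (\<alpha> k) * (\<Prod>i\<in>A - {k}. bracket (\<alpha> i) (\<alpha> j)))"
    proof (intro sum.cong refl)
      fix k assume k: "k \<in> A"
      have "card (A - {k}) = n - 1" using k fA cA by simp
      then show "fst (\<alpha> k) * hom (n-1) (\<Prod>i\<in>A - {k}. lin_form (\<alpha> i)) (\<alpha> j) = fst (\<alpha> k) * (\<Prod>i\<in>A - {k}. bracket (\<alpha> i) (\<alpha> j))"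
        using hom_prod[of "A - {k}" \<alpha> "\<alpha> j"] fA by simp
    qed
    also have "\<dots> = fst (\<alpha> j) * (\<Prod>i\<in>A - {j}. bracket (\<alpha> i) (\<alpha> j)) + (\<Sum>k\<in>A - {j}. fst (\<alpha> k) * (\<Prod>i\<in>A - {k}. bracket (\<alpha> i) (\<alpha> j)))"
      by (rule sum.remove[OF fA j])
    also have "(\<Sum>k\<in>A - {j}. fst (\<alpha> k) * (\<Prod>i\<in>A - {k}. bracket (\<alpha> i) (\<alpha> j))) = 0"
    proof (intro sum.neutral ballI)
      fix k assume k: "k \<in> A - {j}"
      then have jk: "j \<in> A - {k}" using j by auto
      have bj: "bracket (\<alpha> j) (\<alpha> j) = 0" by (simp add: bracket_def mult.commute)
      have "(\<Prod>i\<in>A - {k}. bracket (\<alpha> i) (\<alpha> j)) = 0"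
        using fA jk bj by (subst prod_zero_iff) (auto intro!: bexI[where x=j])
      then show "fst (\<alpha> k) * (\<Prod>i\<in>A - {k}. bracket (\<alpha> i) (\<alpha> j)) = 0" by simp
    qed
    finally show "hom (n-1) (pderiv F) (\<alpha> j) = fst (\<alpha> j) * P j" by (simp add: P_def)
  qed
  have homG: "\<And>j. hom n (pCons 0 G) (\<alpha> j) = snd (\<alpha> j) * (fst (\<alpha> j) * Q j)"
  proof -
    fix j
    have "hom n (pCons 0 G) (\<alpha> j) = snd (\<alpha> j) * hom (n-1) G (\<alpha> j)" by (metis e1 hom_pCons0)
    moreover have "hom (n-1) G (\<alpha> j) = fst (\<alpha> j) * hom (n-2) G (\<alpha> j)" by (metis e2 hom_Suc_deg degG)
    moreover have "hom (n-2) G (\<alpha> j) = Q j" using hom_prod[of "{1..n-2}" \<beta> "\<alpha> j"] by (simp add: G_def Q_def)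
    ultimately show "hom n (pCons 0 G) (\<alpha> j) = snd (\<alpha> j) * (fst (\<alpha> j) * Q j)" by simp
  qed
  have homFp: "\<And>j. j \<in> A \<Longrightarrow> hom n (pCons 0 (pderiv F)) (\<alpha> j) = snd (\<alpha> j) * (fst (\<alpha> j) * P j)"
    by (metis e1 hom_pCons0 homF')
  have homH: "\<And>j. j \<in> A \<Longrightarrow> hom n H (\<alpha>' j) = smult (snd (\<alpha> j) * fst (\<alpha> j)) [:P j, Q j:]"
  proof -
    fix j assume j: "j \<in> A"
    have "hom n H (\<alpha>' j) = [:hom n (pCons 0 (pderiv F)) (\<alpha> j):] + [:0,1:] * [:hom n (pCons 0 G) (\<alpha> j):]"
      unfolding H_def DR_second_def hom_add hom_smult \<alpha>'_def hom_lift by simp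
    then show "hom n H (\<alpha>' j) = smult (snd (\<alpha> j) * fst (\<alpha> j)) [:P j, Q j:]"
      using homFp[OF j] homG[of j] by (simp add: mult_ac)
  qed
  define C where "C = (\<Prod>j\<in>A. (-1)^n * (snd (\<alpha> j) * fst (\<alpha> j)))"
  have resval: "res_form n n (map_poly (\<lambda>c. [:c:]) F) H = smult C (\<Prod>j\<in>A. [:P j, Q j:])"
  proof -
    have "map_poly (\<lambda>c. [:c:]) F = (\<Prod>i\<in>A. lin_form (\<alpha>' i))"
      unfolding F_def lift_prod \<alpha>'_def ..
    then have "res_form n n (map_poly (\<lambda>c. [:c:]) F) H = res_form (card A) n (\<Prod>i\<in>A. lin_form (\<alpha>' i)) H"
      using cA by simp
    also have "\<dots> = (\<Prod>j\<in>A. (-1)^n * hom n H (\<alpha>' j))"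
      by (rule res_prod[OF fA _ degH]) (simp add: \<alpha>'_def nz)
    also have "\<dots> = (\<Prod>j\<in>A. smult ((-1)^n * (snd (\<alpha> j) * fst (\<alpha> j))) [:P j, Q j:])"
      by (intro prod.cong refl) (simp only: homH negone_smult)
    also have "\<dots> = smult C (\<Prod>j\<in>A. [:P j, Q j:])" unfolding C_def by (rule prod_smult)
    finally show ?thesis .
  qed
  have coeffs: "coeff F 0 * coeff F n = C"
  proof -
    have c0: "coeff F 0 = (-1)^n * (\<Prod>j\<in>A. snd (\<alpha> j))"
      by (simp add: poly_0_coeff_0[symmetric] F_def poly_prod lin_form_def prod_uminus cA)
    have dF: "degree F = n"
    proof -
      have "degree F = (\<Sum>i\<in>A. degree (lin_form (\<alpha> i)))" unfolding F_def
        by (rule degree_prod_eq_sum_degree) (auto simp: lin_form_def nz)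
      also have "\<dots> = (\<Sum>i\<in>A. 1)" by (intro sum.cong refl) (simp add: lin_form_def nz)
      finally show ?thesis using cA by simp
    qed
    have cn: "coeff F n = (\<Prod>j\<in>A. fst (\<alpha> j))"
      using dF lead_coeff_prod[of "\<lambda>i. lin_form (\<alpha> i)" A] unfolding F_def[symmetric]
      by (simp add: lin_form_def nz)
    have pw: "((-1::'a)^n)^n = (-1)^n" by (cases "even n") simp_all
    show ?thesis unfolding C_def c0 cn prod.distrib using cA pw by (simp add: mult_ac)
  qed
  have Cnz: "C \<noteq> 0" unfolding C_def using fA nz by (auto simp: prod_zero_iff)
  have DRP: "DR_poly n F G = (\<Prod>j\<in>A. [:P j, Q j:])"
  proof -
    have "DR_poly n F G = (THE P'. smult (coeff F 0 * coeff F n) P' = res_form n n (map_poly (\<lambda>c. [:c:]) F) H)"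
      by (simp add: DR_poly_def H_def)
    also have "\<dots> = (\<Prod>j\<in>A. [:P j, Q j:])"
    proof (rule the_equality)
      show "smult (coeff F 0 * coeff F n) (\<Prod>j\<in>A. [:P j, Q j:]) = res_form n n (map_poly (\<lambda>c. [:c:]) F) H"
        using resval coeffs by simp
      fix P' assume "smult (coeff F 0 * coeff F n) P' = res_form n n (map_poly (\<lambda>c. [:c:]) F) H"
      then have "smult C P' = smult C (\<Prod>j\<in>A. [:P j, Q j:])" using resval coeffs by simp
      then show "P' = (\<Prod>j\<in>A. [:P j, Q j:])" using smult_cancel Cnz by blast
    qed
    finally show ?thesis .
  qed
  have main: "DR n r F G = (\<Sum>I\<in>{I. I \<subseteq> {1..n} \<and> card I = r}.
                  (\<Prod>j\<in>{1..n} - I. \<Prod>i\<in>{1..n} - {j}. bracket (\<alpha> i) (\<alpha> j)) *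
                  (\<Prod>i\<in>I. \<Prod>m\<in>{1..n-2}. bracket (\<beta> m) (\<alpha> i)))"
  proof -
    have "DR n r F G = (\<Sum>I\<in>{I. I \<subseteq> A \<and> card I = r}. (\<Prod>j\<in>A - I. P j) * (\<Prod>i\<in>I. Q i))"
      unfolding DR_def DRP by (rule coeff_prod_lin[OF fA])
    then show ?thesis by (simp add: A_def P_def Q_def)
  qed
  have Feq: "(\<Prod>i=1..n. lin_form (\<alpha> i)) = F" by (simp add: F_def A_def)
  have Geq: "(\<Prod>m=1..n-2. lin_form (\<beta> m)) = G" by (simp add: G_def)
  show ?thesis
  proof (cases "n = 2 \<and> r = 2")
    case True
    have st: "{I. I \<subseteq> {1..n} \<and> card I = r} = {{1..n}}"
    proof
      show "{I. I \<subseteq> {1..n} \<and> card I = r} \<subseteq> {{1..n}}"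
      proof
        fix I assume "I \<in> {I. I \<subseteq> {1..n} \<and> card I = r}"
        then have "I \<subseteq> {1..n}" "card I = card {1..n}" using True by auto
        then have "I = {1..n}" using card_subset_eq[of "{1..n}" I] by simp
        then show "I \<in> {{1..n}}" by simp
      qed
      show "{{1..n}} \<subseteq> {I. I \<subseteq> {1..n} \<and> card I = r}" using True by simp
    qed
    have "DR n r F G = 1" using main True unfolding st by simp
    moreover have "G = 1" using True by (simp add: G_def)
    ultimately show ?thesis unfolding Let_def Feq Geq using True by simp
  next
    case False
    show ?thesis unfolding Let_def Feq Geq if_not_P[OF False] using main by simp
  qed
qed

end
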